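(* Let $\mathbb{Q}[[Z]]$ and $\mathbb{Q}[[X,Y]]$ be the formal power series rings, each equipped with the topology given by the filtration by total degree ($F_p^Z$, resp. $F_p^{X,Y}$, being the set of series having only terms of total degree $\ge p$). Set $z:=e^Z=\sum_{i\ge0}Z^i/i!\in\mathbb{Q}[[Z]]$, so that the Laurent polynomial ring $\mathbb{Q}[z,z^{-1}]$ is a subring of $\mathbb{Q}[[Z]]$. Define a $\mathbb{Q}$-linear map $\hat\mu\colon\mathbb{Q}[z,z^{-1}]\to\mathbb{Q}[[X,Y]]$ by $$\hat{\mu}(z^k)=\begin{cases}-\sum_{i=1}^k e^{iX}e^{(k-i)Y} & (k>0),\\ 0 & (k=0),\\ \sum_{i=0}^{|k|-1}e^{-iX}e^{(k+i)Y} & (k<0).\end{cases}$$ Then there exists a unique continuous map $\hat\mu\colon\mathbb{Q}[[Z]]\to\mathbb{Q}[[X,Y]]$ extending this map.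
   Context: Here $e^{W}$ denotes the formal exponential series $\sum_{i\ge0}W^i/i!$. The subspace topology on $\mathbb{Q}[z,z^{-1}]$ induced from $\mathbb{Q}[[Z]]$ coincides with the $I$-adic topology, where $I$ is the augmentation ideal (kernel of $\sum_j a_jz^j\mapsto\sum_j a_j$). *)

theory Defs
  imports "HOL-Computational_Algebra.Formal_Power_Series"
begin

text \<open>Q[[Z]] is rat fps. Q[[X,Y]] is represented by coefficient functions
  g :: nat => nat => rat, where g i j is the coefficient of X^i Y^j.\<close>

type_synonym ps2 = "nat \<Rightarrow> nat \<Rightarrow> rat"

definition filtZ :: "nat \<Rightarrow> rat fps set" where
  "filtZ p = {f. \<forall>n<p. fps_nth f n = 0}"

definition filtXY :: "nat \<Rightarrow> ps2 set" where
  "filtXY p = {g. \<forall>i j. i + j < p \<longrightarrow> g i j = 0}"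

definition cont_filt :: "(rat fps \<Rightarrow> ps2) \<Rightarrow> bool" where
  "cont_filt F \<longleftrightarrow> (\<forall>x p. \<exists>q. \<forall>y. y - x \<in> filtZ q \<longrightarrow>
       (\<lambda>i j. F y i j - F x i j) \<in> filtXY p)"

definition expXY :: "int \<Rightarrow> int \<Rightarrow> ps2" where
  "expXY a b = (\<lambda>i j. (of_int a) ^ i / of_nat (fact i) * ((of_int b) ^ j / of_nat (fact j)))"

definition mu :: "int \<Rightarrow> ps2" where
  "mu k = (if k > 0 then (\<lambda>i j. - (\<Sum>l\<in>{1..k}. expXY l (k - l) i j))
           else if k = 0 then (\<lambda>i j. 0)
           else (\<lambda>i j. \<Sum>l\<in>{0..\<bar>k\<bar> - 1}. expXY (- l) (k + l) i j))"

text \<open>z = e^Z, so z^k = fps_exp k in Q[[Z]].\<close>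
definition zpow :: "int \<Rightarrow> rat fps" where
  "zpow k = fps_exp (of_int k)"

end

theory Submission
  imports Defs
begin
unbundle fps_syntax

definition embX :: "rat fps \<Rightarrow> rat fps fps" where
  "embX f = Abs_fps (\<lambda>i. fps_const (f $ i))"
definition Dop :: "rat fps \<Rightarrow> rat fps fps" where
  "Dop f = Abs_fps (\<lambda>a. Abs_fps (\<lambda>b. f $ (a+b+1)))"
definition toPS2 :: "rat fps fps \<Rightarrow> ps2" where
  "toPS2 P = (\<lambda>i j. P $ i $ j)"

lemma D_eq: "Dop f * (fps_X - fps_const fps_X) = embX f - fps_const f"
proof (rule fps_ext)
  fix a
  show "(Dop f * (fps_X - fps_const fps_X)) $ a = (embX f - fps_const f) $ a"
  proof (rule fps_ext)
    fix b
    have "(Dop f * (fps_X - fps_const fps_X)) $ a = (fps_X * Dop f) $ a - Dop f $ a * fps_X"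
      by (simp add: algebra_simps del: fps_X_mult_nth)
    then show "(Dop f * (fps_X - fps_const fps_X)) $ a $ b = (embX f - fps_const f) $ a $ b"
      by (simp add: embX_def Dop_def)
  qed
qed

lemma embX_mult: "embX (f * g) = embX f * embX g"
  by (rule fps_ext, rule fps_ext) (simp add: embX_def fps_mult_nth fps_sum_nth)

lemma embX_one: "embX 1 = 1"
  by (rule fps_ext) (simp add: embX_def)

lemma embX_power: "embX (f ^ n) = embX f ^ n"
  by (induction n) (simp_all add: embX_one embX_mult)

definition EXi :: "int \<Rightarrow> rat fps fps" where "EXi k = embX (fps_exp (of_int k))"
definition EYi :: "int \<Rightarrow> rat fps fps" where "EYi k = fps_const (fps_exp (of_int k))"

lemma exp_nat: "fps_exp (of_int (int n) :: rat) = fps_exp 1 ^ n"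
  by (simp add: fps_exp_power_mult)
lemma exp_negnat: "fps_exp (of_int (- int n) :: rat) = fps_exp (-1) ^ n"
  by (simp add: fps_exp_power_mult)

lemma EXi_pos: "EXi (int n) = EXi 1 ^ n"
  unfolding EXi_def using exp_nat[of n] by (simp add: embX_power)
lemma EXi_neg: "EXi (- int n) = EXi (-1) ^ n"
  unfolding EXi_def using exp_negnat[of n] by (simp add: embX_power)
lemma EYi_pos: "EYi (int n) = EYi 1 ^ n"
  unfolding EYi_def using exp_nat[of n] by (simp add: fps_const_power)
lemma EYi_neg: "EYi (- int n) = EYi (-1) ^ n"
  unfolding EYi_def using exp_negnat[of n] by (simp add: fps_const_power)
lemma EXi_inv: "EXi 1 * EXi (-1) = 1"
proof -
  have "fps_exp (1::rat) * fps_exp (-1) = 1"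
    by (metis add.right_inverse fps_exp_add_mult fps_exp_0)
  then show ?thesis unfolding EXi_def by (simp add: embX_mult[symmetric] embX_one)
qed
lemma EYi_inv: "EYi 1 * EYi (-1) = 1"
proof -
  have "fps_exp (1::rat) * fps_exp (-1) = 1"
    by (metis add.right_inverse fps_exp_add_mult fps_exp_0)
  then show ?thesis unfolding EYi_def by (simp add: fps_const_mult)
qed

lemma toPS2_EXY: "toPS2 (EXi a * EYi b) = expXY a b"
  by (simp add: toPS2_def EXi_def EYi_def embX_def expXY_def fun_eq_iff)

definition EE :: "rat fps fps" where "EE = Dop (fps_exp 1)"
definition HH :: "rat fps fps" where "HH = fps_right_inverse EE (inverse (EE $ 0))"

lemma EE_HH: "EE * HH = 1"
  unfolding HH_def
proof (rule fps_right_inverse)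
  have "EE $ 0 $ 0 \<noteq> 0" by (simp add: EE_def Dop_def)
  then show "EE $ 0 * inverse (EE $ 0) = 1" by (rule inverse_mult_eq_1')
qed

lemma EE_eq: "EE * (fps_X - fps_const fps_X) = EXi 1 - EYi 1"
  unfolding EE_def EXi_def EYi_def using D_eq by simp

lemma Dzpow: "Dop (zpow k) * (fps_X - fps_const fps_X) = EXi k - EYi k"
  unfolding zpow_def EXi_def EYi_def using D_eq by simp

lemma xy_nz: "EXi 1 - EYi 1 \<noteq> 0"
proof
  assume "EXi 1 - EYi 1 = 0"
  then have "(EXi 1 - EYi 1) $ 1 $ 0 = 0" by simp
  then show False by (simp add: EXi_def EYi_def embX_def)
qed

lemma alg_pos:
  fixes x y :: "'a::comm_ring_1"
  shows "(\<Sum>l\<in>{1..Suc m}. x^l*y^(Suc m - l)) * (x - y) = x*(x^Suc m - y^Suc m)"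
proof -
  have "(\<Sum>l\<in>{1..Suc m}. x^l*y^(Suc m - l)) = (\<Sum>p\<in>{0..m}. x^(Suc p)*y^(Suc m - Suc p))"
    using sum.shift_bounds_cl_Suc_ivl[of "\<lambda>l. x^l*y^(Suc m - l)" 0 m] by simp
  also have "\<dots> = x * (\<Sum>p<Suc m. x^p*y^(m - p))"
    by (simp add: sum_distrib_left atLeast0AtMost lessThan_Suc_atMost mult.assoc)
  finally have e: "(\<Sum>l\<in>{1..Suc m}. x^l*y^(Suc m - l)) = x * (\<Sum>p<Suc m. x^p*y^(m - p))" .
  show ?thesis unfolding e diff_power_eq_sum[of x m y] by (simp only: mult_ac)
qed

lemma alg_neg:
  fixes x y xi yi :: "'a::comm_ring_1"
  assumes "x*xi = 1" "y*yi = 1"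
  shows "(\<Sum>l\<in>{0..m}. xi^l*yi^(Suc m - l)) * (x - y) = - x*(xi^Suc m - yi^Suc m)"
proof -
  define S where "S = (\<Sum>p<Suc m. xi^p*yi^(m - p))"
  have "(\<Sum>l\<in>{0..m}. xi^l*yi^(Suc m - l)) = yi * S"
    unfolding S_def by (simp add: sum_distrib_left atLeast0AtMost lessThan_Suc_atMost mult_ac Suc_diff_le)
  moreover have "xi^Suc m - yi^Suc m = (xi - yi) * S" unfolding S_def by (rule diff_power_eq_sum)
  moreover have "(xi - yi)*x*y = y - x" using assms by (simp add: algebra_simps)
  ultimately show ?thesis
    by (metis (no_types, lifting) assms(2) minus_diff_eq mult.assoc mult.commute mult.left_commute mult_1 mult_minus_left)
qed

definition Mk :: "int \<Rightarrow> rat fps fps" where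
  "Mk k = (if k > 0 then - (\<Sum>l\<in>{1..k}. EXi l * EYi (k - l))
           else if k = 0 then 0
           else (\<Sum>l\<in>{0..\<bar>k\<bar> - 1}. EXi (- l) * EYi (k + l)))"

lemma toPS2_Mk: "toPS2 (Mk k) = mu k"
proof -
  have e: "(EXi a * EYi b) $ i $ j = expXY a b i j" for a b i j
    using toPS2_EXY[of a b] by (simp add: toPS2_def fun_eq_iff)
  show ?thesis
    unfolding Mk_def mu_def toPS2_def by (simp add: fun_eq_iff fps_sum_nth e)
qed

lemma Mk_id: "Mk k * (EXi 1 - EYi 1) = - EXi 1 * (EXi k - EYi k)"
proof -
  consider "k > 0" | "k = 0" | "k < 0" by linarith
  then show ?thesis
  proof cases
    case 1
    have "k = int (Suc (nat k - 1))" using 1 by simp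
    then obtain m where m: "k = int (Suc m)" by blast
    have "(\<Sum>l\<in>{1..k}. EXi l * EYi (k - l)) = (\<Sum>l\<in>int ` {1..Suc m}. EXi l * EYi (k - l))"
      by (simp add: m image_int_atLeastAtMost)
    also have "\<dots> = (\<Sum>l\<in>{1..Suc m}. EXi (int l) * EYi (int (Suc m - l)))"
      by (subst sum.reindex) (auto simp: m of_nat_diff)
    also have "\<dots> = (\<Sum>l\<in>{1..Suc m}. EXi 1 ^ l * EYi 1 ^ (Suc m - l))"
      by (simp only: EXi_pos EYi_pos)
    finally have "Mk k = - (\<Sum>l\<in>{1..Suc m}. EXi 1 ^ l * EYi 1 ^ (Suc m - l))"
      using 1 by (simp add: Mk_def)
    then have "Mk k * (EXi 1 - EYi 1) = - ((\<Sum>l\<in>{1..Suc m}. EXi 1 ^ l * EYi 1 ^ (Suc m - l)) * (EXi 1 - EYi 1))"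
      by (simp only: minus_mult_left)
    also have "\<dots> = - (EXi 1 * (EXi 1 ^ Suc m - EYi 1 ^ Suc m))"
      by (simp only: alg_pos)
    also have "\<dots> = - EXi 1 * (EXi k - EYi k)"
      by (simp only: m EXi_pos EYi_pos minus_mult_left)
    finally show ?thesis .
  next
    case 2 then show ?thesis unfolding Mk_def EXi_def EYi_def using 2 by (simp add: embX_one)
  next
    case 3
    have "k = - int (Suc (nat (-k) - 1))" using 3 by simp
    then obtain m where m: "k = - int (Suc m)" by blast
    have "(\<Sum>l\<in>{0..\<bar>k\<bar> - 1}. EXi (- l) * EYi (k + l)) = (\<Sum>l\<in>int ` {0..m}. EXi (- l) * EYi (k + l))"
      by (simp add: m image_int_atLeastAtMost)
    also have "\<dots> = (\<Sum>l\<in>{0..m}. EXi (- int l) * EYi (- int (Suc m - l)))"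
    proof (subst sum.reindex, simp, rule sum.cong)
      fix l assume "l \<in> {0..m}"
      then have "k + int l = - int (Suc m - l)" by (simp add: m of_nat_diff)
      then show "((\<lambda>l. EXi (- l) * EYi (k + l)) \<circ> int) l = EXi (- int l) * EYi (- int (Suc m - l))"
        by simp
    qed simp
    also have "\<dots> = (\<Sum>l\<in>{0..m}. EXi (-1) ^ l * EYi (-1) ^ (Suc m - l))"
      by (simp only: EXi_neg EYi_neg)
    finally have "Mk k = (\<Sum>l\<in>{0..m}. EXi (-1) ^ l * EYi (-1) ^ (Suc m - l))"
      using 3 by (simp add: Mk_def)
    then have "Mk k * (EXi 1 - EYi 1) = (\<Sum>l\<in>{0..m}. EXi (-1) ^ l * EYi (-1) ^ (Suc m - l)) * (EXi 1 - EYi 1)"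
      by simp
    also have "\<dots> = - EXi 1 * (EXi (-1) ^ Suc m - EYi (-1) ^ Suc m)"
      by (rule alg_neg[OF EXi_inv EYi_inv])
    also have "\<dots> = - EXi 1 * (EXi k - EYi k)"
      by (simp only: m EXi_neg EYi_neg)
    finally show ?thesis .
  qed
qed

definition CC :: "rat fps fps" where "CC = - EXi 1 * HH"
definition Fmap :: "rat fps \<Rightarrow> ps2" where "Fmap f = toPS2 (CC * Dop f)"

lemma Fmap_zpow: "Fmap (zpow k) = mu k"
proof -
  have "CC * Dop (zpow k) * (EXi 1 - EYi 1) = Mk k * (EXi 1 - EYi 1)"
  proof -
    have "CC * Dop (zpow k) * (EXi 1 - EYi 1) = - EXi 1 * (HH * EE) * (Dop (zpow k) * (fps_X - fps_const fps_X))"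
      unfolding CC_def EE_eq[symmetric] by (simp only: mult_ac)
    also have "\<dots> = - EXi 1 * (EXi k - EYi k)" by (simp add: EE_HH mult.commute[of HH] Dzpow)
    finally show ?thesis by (simp add: Mk_id)
  qed
  then have "CC * Dop (zpow k) = Mk k" using xy_nz by simp
  then show ?thesis by (simp add: Fmap_def toPS2_Mk)
qed


lemma Fmap_formula: "Fmap f i j = (\<Sum>u=0..i. \<Sum>v=0..j. CC $ u $ v * f $ Suc (i + j - (v + u)))"
  by (simp add: Fmap_def toPS2_def fps_mult_nth fps_sum_nth Dop_def)

lemma Fmap_add: "Fmap (f + g) i j = Fmap f i j + Fmap g i j"
  by (simp add: Fmap_formula sum.distrib algebra_simps)
lemma Fmap_scale: "Fmap (fps_const c * f) i j = c * Fmap f i j"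
  by (simp add: Fmap_formula sum_distrib_left algebra_simps)
lemma Fmap_zero: "Fmap 0 i j = 0"
  by (simp add: Fmap_formula)

lemma Fmap_lin: "finite S \<Longrightarrow> Fmap (\<Sum>k\<in>S. fps_const (a k) * g k) = (\<lambda>i j. \<Sum>k\<in>S. a k * Fmap (g k) i j)"
  by (induction S rule: finite_induct) (auto simp: fun_eq_iff Fmap_add Fmap_scale Fmap_zero)

lemma Fmap_cont: "cont_filt Fmap"
  unfolding cont_filt_def
proof (intro allI)
  fix x p
  show "\<exists>q. \<forall>y. y - x \<in> filtZ q \<longrightarrow> (\<lambda>i j. Fmap y i j - Fmap x i j) \<in> filtXY p"
  proof (intro exI[of _ "Suc p"] allI impI)
    fix y assume "y - x \<in> filtZ (Suc p)"
    then have h: "n < Suc p \<Longrightarrow> y $ n = x $ n" for n by (auto simp: filtZ_def)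
    show "(\<lambda>i j. Fmap y i j - Fmap x i j) \<in> filtXY p"
      unfolding filtXY_def
    proof (intro CollectI allI impI)
      fix i j assume "i + j < p"
      then have "Fmap y i j = Fmap x i j" unfolding Fmap_formula
        by (intro sum.cong refl) (simp add: h)
      then show "Fmap y i j - Fmap x i j = 0" by simp
    qed
  qed
qed

definition inspan :: "rat fps \<Rightarrow> bool" where
  "inspan g \<longleftrightarrow> (\<exists>S a. finite S \<and> g = (\<Sum>k\<in>S. fps_const (a k) * zpow k))"

lemma inspanI: "finite S \<Longrightarrow> g = (\<Sum>k\<in>S. fps_const (a k) * zpow k) \<Longrightarrow> inspan g"
  unfolding inspan_def by blast

lemma inspanE: assumes "inspan g"
  obtains S a where "finite S" "g = (\<Sum>k\<in>S. fps_const (a k) * zpow k)"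
  using assms unfolding inspan_def by blast

lemma inspan_add: assumes "inspan f" "inspan g" shows "inspan (f + g)"
proof -
  obtain S a where S: "finite S" "f = (\<Sum>k\<in>S. fps_const (a k) * zpow k)" using assms(1) by (rule inspanE)
  obtain T b where T: "finite T" "g = (\<Sum>k\<in>T. fps_const (b k) * zpow k)" using assms(2) by (rule inspanE)
  have "(\<Sum>k\<in>S \<union> T. fps_const (if k \<in> S then a k else 0) * zpow k) = (\<Sum>k\<in>S. fps_const (if k \<in> S then a k else 0) * zpow k)"
    by (rule sum.mono_neutral_right) (use S(1) T(1) in auto)
  also have "\<dots> = (\<Sum>k\<in>S. fps_const (a k) * zpow k)"
    by (rule sum.cong) auto
  finally have ce1: "(\<Sum>k\<in>S \<union> T. fps_const (if k \<in> S then a k else 0) * zpow k) = (\<Sum>k\<in>S. fps_const (a k) * zpow k)" .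
  have e1: "f = (\<Sum>k\<in>S \<union> T. fps_const (if k \<in> S then a k else 0) * zpow k)"
    using ce1 S(2) by (simp only:)
  have "(\<Sum>k\<in>S \<union> T. fps_const (if k \<in> T then b k else 0) * zpow k) = (\<Sum>k\<in>T. fps_const (if k \<in> T then b k else 0) * zpow k)"
    by (rule sum.mono_neutral_right) (use S(1) T(1) in auto)
  also have "\<dots> = (\<Sum>k\<in>T. fps_const (b k) * zpow k)"
    by (rule sum.cong) auto
  finally have ce2: "(\<Sum>k\<in>S \<union> T. fps_const (if k \<in> T then b k else 0) * zpow k) = (\<Sum>k\<in>T. fps_const (b k) * zpow k)" .
  have e2: "g = (\<Sum>k\<in>S \<union> T. fps_const (if k \<in> T then b k else 0) * zpow k)"
    using ce2 T(2) by (simp only:)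
  define c where "c = (\<lambda>k. (if k \<in> S then a k else 0) + (if k \<in> T then b k else 0))"
  have "f + g = (\<Sum>k\<in>S \<union> T. fps_const (c k) * zpow k)"
    unfolding e1 e2 sum.distrib[symmetric] c_def by (rule sum.cong) (simp_all only: distrib_right[symmetric] fps_const_add)
  moreover have "finite (S \<union> T)" using S(1) T(1) by simp
  ultimately show ?thesis by (rule inspanI[rotated])
qed

lemma inspan_scale: assumes "inspan f" shows "inspan (fps_const c * f)"
proof -
  obtain S a where S: "finite S" "f = (\<Sum>k\<in>S. fps_const (a k) * zpow k)" using assms(1) by (rule inspanE)
  have "fps_const c * f = (\<Sum>k\<in>S. fps_const (c * a k) * zpow k)"
    unfolding S(2) sum_distrib_left
  proof (rule sum.cong)
    fix k
    show "fps_const c * (fps_const (a k) * zpow k) = fps_const (c * a k) * zpow k"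
      by (simp only: mult.assoc[symmetric] fps_const_mult)
  qed simp
  then show ?thesis by (rule inspanI[OF S(1)])
qed

lemma inspan_shift: assumes "inspan f" shows "inspan (f * zpow 1)"
proof -
  obtain S a where S: "finite S" "f = (\<Sum>k\<in>S. fps_const (a k) * zpow k)" using assms(1) by (rule inspanE)
  have zz: "zpow k * zpow 1 = zpow (k + 1)" for k
    by (simp add: zpow_def fps_exp_add_mult)
  have "f * zpow 1 = (\<Sum>k\<in>S. fps_const (a k) * zpow (k + 1))"
    unfolding S(2) sum_distrib_right by (simp add: mult.assoc zz)
  also have "\<dots> = (\<Sum>k\<in>(\<lambda>k. k + 1) ` S. fps_const (a (k - 1)) * zpow k)"
    by (subst sum.reindex) (auto simp: inj_on_def)
  finally show ?thesis by (rule inspanI[rotated]) (use S(1) in simp)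
qed

lemma inspan_one: "inspan 1"
proof -
  have "(1::rat fps) = (\<Sum>k\<in>{0}. fps_const 1 * zpow k)" by (simp add: zpow_def)
  then show ?thesis by (rule inspanI[rotated]) simp
qed

lemma inspan_pow: "inspan ((zpow 1 - 1) ^ q)"
proof (induction q)
  case 0 then show ?case by (simp add: inspan_one)
next
  case (Suc q)
  have m1: "fps_const (-1) * (zpow 1 - 1) ^ q = - ((zpow 1 - 1) ^ q)"
    by (metis fps_const_neg fps_const_1_eq_1 mult_minus1)
  have "(zpow 1 - 1) ^ Suc q = (zpow 1 - 1) ^ q * zpow 1 - (zpow 1 - 1) ^ q"
    by (simp add: algebra_simps)
  then have "(zpow 1 - 1) ^ Suc q = (zpow 1 - 1) ^ q * zpow 1 + fps_const (-1) * (zpow 1 - 1) ^ q"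
    unfolding m1 by simp
  moreover have "inspan ((zpow 1 - 1) ^ q * zpow 1 + fps_const (-1) * (zpow 1 - 1) ^ q)"
    by (rule inspan_add[OF inspan_shift[OF Suc.IH] inspan_scale[OF Suc.IH]])
  ultimately show ?case by simp
qed

definition gg :: "rat fps" where "gg = Abs_fps (\<lambda>n. fps_exp 1 $ (n + 1))"

lemma zpow1_eq: "zpow 1 - 1 = fps_X * gg"
proof (rule fps_ext)
  fix n show "(zpow 1 - 1) $ n = (fps_X * gg) $ n"
    by (cases n) (simp_all add: zpow_def gg_def)
qed

lemma pow_coeffs: "((zpow 1 - 1) ^ q) $ n = (if n < q then 0 else (gg ^ q) $ (n - q))"
  unfolding zpow1_eq power_mult_distrib by (simp add: fps_X_power_mult_nth)

lemma gg0: "(gg ^ q) $ 0 = 1"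
  by (simp add: fps_nth_power_0 gg_def)

lemma density: "\<exists>L. inspan L \<and> (\<forall>n<q. L $ n = f $ n)"
proof (induction q)
  case 0 then show ?case using inspan_one by blast
next
  case (Suc q)
  then obtain L where L: "inspan L" "\<forall>n<q. L $ n = f $ n" by blast
  define L' where "L' = L + fps_const (f $ q - L $ q) * (zpow 1 - 1) ^ q"
  have "inspan L'" unfolding L'_def using L(1) inspan_pow inspan_add inspan_scale by blast
  moreover have "\<forall>n<Suc q. L' $ n = f $ n"
  proof (intro allI impI)
    fix n assume "n < Suc q"
    then consider "n < q" | "n = q" by linarith
    then show "L' $ n = f $ n"
      by cases (simp_all add: L'_def pow_coeffs gg0 L(2))
  qed
  ultimately show ?case by blast
qed

theorem lemma2:
  shows "\<exists>!F :: rat fps \<Rightarrow> ps2. cont_filt F \<and>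
     (\<forall>(S :: int set) (a :: int \<Rightarrow> rat). finite S \<longrightarrow>
        F (\<Sum>k\<in>S. fps_const (a k) * zpow k) = (\<lambda>i j. \<Sum>k\<in>S. a k * mu k i j))"
proof (rule ex1I[of _ Fmap])
  show "cont_filt Fmap \<and>
     (\<forall>(S :: int set) (a :: int \<Rightarrow> rat). finite S \<longrightarrow>
        Fmap (\<Sum>k\<in>S. fps_const (a k) * zpow k) = (\<lambda>i j. \<Sum>k\<in>S. a k * mu k i j))"
    using Fmap_cont by (simp add: Fmap_lin Fmap_zpow)
next
  fix G :: "rat fps \<Rightarrow> ps2"
  assume G: "cont_filt G \<and>
     (\<forall>(S :: int set) (a :: int \<Rightarrow> rat). finite S \<longrightarrow>
        G (\<Sum>k\<in>S. fps_const (a k) * zpow k) = (\<lambda>i j. \<Sum>k\<in>S. a k * mu k i j))"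
  have GL: "inspan L \<Longrightarrow> G L = Fmap L" for L
  proof -
    assume "inspan L"
    then obtain S a where S: "finite S" "L = (\<Sum>k\<in>S. fps_const (a k) * zpow k)" by (rule inspanE)
    have "G L = (\<lambda>i j. \<Sum>k\<in>S. a k * mu k i j)" using G S by blast
    moreover have "Fmap L = (\<lambda>i j. \<Sum>k\<in>S. a k * mu k i j)" using Fmap_lin[OF S(1)] S(2) by (simp add: Fmap_zpow)
    ultimately show ?thesis by simp
  qed
  show "G = Fmap"
  proof (intro ext)
    fix f i j
    obtain q1 where q1: "\<forall>y. y - f \<in> filtZ q1 \<longrightarrow> (\<lambda>i j. G y i j - G f i j) \<in> filtXY (i + j + 1)"
      using G unfolding cont_filt_def by blast
    obtain q2 where q2: "\<forall>y. y - f \<in> filtZ q2 \<longrightarrow> (\<lambda>i j. Fmap y i j - Fmap f i j) \<in> filtXY (i + j + 1)"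
      using Fmap_cont unfolding cont_filt_def by blast
    obtain L where L: "inspan L" "\<forall>n<max q1 q2. L $ n = f $ n" using density by blast
    have "L - f \<in> filtZ q1" "L - f \<in> filtZ q2" using L(2) by (auto simp: filtZ_def)
    then have "G L i j - G f i j = 0" "Fmap L i j - Fmap f i j = 0"
      using q1 q2 by (auto simp: filtXY_def)
    then show "G f i j = Fmap f i j" using GL[OF L(1)] by simp
  qed
qed

end
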